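(* Let $n\ge 2$, $1\le f\le n-1$ and $2\le c\le n$. Under the SSYNC scheduler with at most $f$ crash faults: (1) If $c=2$: the MAS of the $f$-fault tolerant $2$-scattering problem is $\infty$ when $f=n-1$, and is $f+2$ when $1\le f\le n-2$ (in which case the algorithm $\{sct_1,\dots,sct_{f+2}\}$ solves it). (2) If $3\le c\le n$: the MAS of the $f$-fault tolerant $c$-scattering problem is $\infty$ when $c+f-1>n$, and is $c+f-1$ when $c+f-1\le n$ (in which case the algorithm $\{sct_1,\dots,sct_{c+f-1}\}$ solves it).
   Context: Model. A swarm consists of $n\ge1$ robots $r_1,\dots,r_n$, modeled as points in $\mathbb R^2$. Each robot $r_i$ has a local right-handed $x$-$y$ coordinate system $Z_i$ whose origin is always the robot's current position, with arbitrary (adversarially chosen, fixed) unit length and axis orientation; robots do not share coordinate systems. The configuration at time $t$ is the multiset $P_t$ of the $n$ robot positions (robots can detect multiplicities). A target function $\phi$ maps each finite multiset $P$ of points of $\mathbb R^2$ with $(0,0)\in P$ to a point $\phi(P)\in\mathbb R^2$. Time is discrete, $t=0,1,2,\dots$. Under the semi-synchronous (SSYNC) scheduler, at each time $t$ an adversary chooses a set of robots to activate; each activated robot $r_i$ observes $P_t$ expressed in $Z_i$, evaluates its target function on this multiset, and moves to the resulting point (interpreted in $Z_i$), arriving before time $t+1$; non-activated robots do not move. Schedules are fair: every robot is activated infinitely often. An algorithm of size $m$ is a set $\Phi$ of $m$ distinct target functions ($m\le n$); an assignment is a surjection $\mathcal A$ from the robots onto $\Phi$, robot $r_i$ using $\mathcal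 A(r_i)$. $\Phi$ solves a problem if for every assignment, every choice of local coordinate systems, every initial configuration and every fair SSYNC schedule, the resulting execution solves the problem. The MAS of a problem is the least $m$ such that some algorithm of size $m$ solves it, and $\infty$ if no algorithm of any size $m\le n$ solves it. For a multiset $P$, $\overline P$ is its set of distinct points. Crash faults. The adversary may choose up to $f$ robots to be faulty and, for each, a time from which it crashes: from then on it never moves again (even when activated); before that it behaves correctly. "Solves under at most $f$ crashes" quantifies additionally over all such crash patterns. Problem. The $f$-fault tolerant $c$-scattering problem: starting from any initial configuration, with at most $f$ crashed robots, reach a configuration $P$ with $|\overline P|\ge c$. Algorithm. For $c'\ge1$, target functions $sct_1,\dots,sct_{c'}$ are: if $|\overline P|\ge c'$, $sct_i(P)=(0,0)$ for all $i$; if $|\overline P|=1$, $sct_1(P)=(0,0)$ and $sct_i(P)=(1,0)$ for $i\ge2$; if $2\le|\overline P|\le c'-1$, $sct_i(P)=(\delta/(2(i+1)),0)$, where $\delta$ is the minimum distance between two distinct points of $\overline P$. *)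

theory Defs
  imports Complex_Main "HOL-Library.Multiset" "HOL-Library.Extended_Nat"
begin

text \<open>Points of the plane R^2 are represented as complex numbers (x,y) = x + i y.
A target function maps a multiset of points (expressed in local coordinates) to a point.\<close>

type_synonym tfun = "complex multiset \<Rightarrow> complex"

definition config :: "nat \<Rightarrow> (nat \<Rightarrow> complex) \<Rightarrow> complex multiset" where
  "config n p = image_mset p (mset_set {..<n})"

text \<open>Local right-handed coordinate system of robot i: fixed nonzero complex a i
(unit length |a i|, orientation arg (a i)), origin at the current position.
A local point z corresponds to the global point  pos + a i * z.
Execution: A = assignment, a = coordinate systems, p0 = initial positions,
act t = robots activated at time t, F = faulty robots, ct i = crash time of robot i.\<close>
primrec exec :: "nat \<Rightarrow> (nat \<Rightarrow> tfun) \<Rightarrow> (nat \<Rightarrow> complex) \<Rightarrow> (nat \<Rightarrow> complex)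
   \<Rightarrow> (nat \<Rightarrow> nat set) \<Rightarrow> nat set \<Rightarrow> (nat \<Rightarrow> nat) \<Rightarrow> nat \<Rightarrow> nat \<Rightarrow> complex" where
  "exec n A a p0 act F ct 0 = p0"
| "exec n A a p0 act F ct (Suc t) =
     (\<lambda>i. let p = exec n A a p0 act F ct t in
       if i \<in> act t \<and> \<not> (i \<in> F \<and> ct i \<le> t)
       then p i + a i * A i (image_mset (\<lambda>q. (q - p i) / a i) (config n p))
       else p i)"

text \<open>An algorithm of size m for n robots: m distinct target functions
(distinct as functions on their domain, the multisets containing the origin), m \<le> n.\<close>
definition is_algorithm :: "nat \<Rightarrow> tfun set \<Rightarrow> nat \<Rightarrow> bool" where
  "is_algorithm n \<Phi> m \<longleftrightarrow> finite \<Phi> \<and> card \<Phi> = m \<and> 1 \<le> m \<and> m \<le> n \<and>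
     (\<forall>\<phi>\<in>\<Phi>. \<forall>\<psi>\<in>\<Phi>. \<phi> \<noteq> \<psi> \<longrightarrow> (\<exists>P. 0 \<in># P \<and> \<phi> P \<noteq> \<psi> P))"

definition solves :: "nat \<Rightarrow> nat \<Rightarrow> nat \<Rightarrow> tfun set \<Rightarrow> bool" where
  "solves n f c \<Phi> \<longleftrightarrow>
     (\<forall>A a p0 act F ct.
        A ` {..<n} = \<Phi> \<longrightarrow>
        (\<forall>i<n. a i \<noteq> 0) \<longrightarrow>
        (\<forall>i<n. infinite {t. i \<in> act t}) \<longrightarrow>
        F \<subseteq> {..<n} \<longrightarrow> card F \<le> f \<longrightarrow>
        (\<exists>t. card (set_mset (config n (exec n A a p0 act F ct t))) \<ge> c))"

definition MAS :: "nat \<Rightarrow> nat \<Rightarrow> nat \<Rightarrow> enat" where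
  "MAS n f c = (if \<exists>m \<Phi>. is_algorithm n \<Phi> m \<and> solves n f c \<Phi>
     then enat (LEAST m. \<exists>\<Phi>. is_algorithm n \<Phi> m \<and> solves n f c \<Phi>) else \<infinity>)"

definition min_dist :: "complex multiset \<Rightarrow> real" where
  "min_dist P = Min {dist p q | p q. p \<in># P \<and> q \<in># P \<and> p \<noteq> q}"

definition sct :: "nat \<Rightarrow> nat \<Rightarrow> tfun" where
  "sct c' i P =
     (if card (set_mset P) \<ge> c' then 0
      else if card (set_mset P) = 1 then (if i = 1 then 0 else 1)
      else complex_of_real (min_dist P / (2 * (real i + 1))))"

definition sct_alg :: "nat \<Rightarrow> tfun set" where
  "sct_alg c' = {sct c' i | i. 1 \<le> i \<and> i \<le> c'}"

end

theory Submission
  imports Defs "HOL-Library.Infinite_Set"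
begin


lemma set_config: "set_mset (config n p) = p ` {..<n}"
  by (simp add: config_def)

lemma config_map: "image_mset g (config n p) = config n (\<lambda>j. g (p j))"
  by (simp add: config_def multiset.map_comp o_def)

definition mdS :: "complex set \<Rightarrow> real" where
  "mdS S = Min {dist p q | p q. p \<in> S \<and> q \<in> S \<and> p \<noteq> q}"

lemma min_dist_mdS: "min_dist P = mdS (set_mset P)"
  by (simp add: min_dist_def mdS_def)

lemma dset_finite: "finite S \<Longrightarrow> finite {dist p q | p q. p \<in> S \<and> q \<in> S \<and> (p::complex) \<noteq> q}"
proof -
  assume "finite S"
  have "{dist p q | p q. p \<in> S \<and> q \<in> S \<and> p \<noteq> q} \<subseteq> (\<lambda>(p,q). dist p q) ` (S \<times> S)"
    by auto
  then show ?thesis using \<open>finite S\<close> finite_subset by blast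
qed

lemma two_elems: "finite S \<Longrightarrow> 2 \<le> card S \<Longrightarrow> \<exists>p q. p \<in> S \<and> q \<in> S \<and> p \<noteq> q"
  by (metis One_nat_def card_le_Suc0_iff_eq not_less_eq_eq numeral_2_eq_2)

lemma card_ge2: "finite S \<Longrightarrow> x \<in> S \<Longrightarrow> y \<in> S \<Longrightarrow> x \<noteq> y \<Longrightarrow> 2 \<le> card S"
proof -
  assume a: "finite S" "x \<in> S" "y \<in> S" "x \<noteq> y"
  then have "card {x,y} \<le> card S" by (intro card_mono) auto
  with a show ?thesis by simp
qed

lemma md_pos: "finite S \<Longrightarrow> 2 \<le> card S \<Longrightarrow> mdS S > 0"
proof -
  assume a: "finite S" "2 \<le> card S"
  then obtain p q where "p \<in> S" "q \<in> S" "p \<noteq> q" using two_elems by blast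
  then have ne: "{dist p q | p q. p \<in> S \<and> q \<in> S \<and> p \<noteq> q} \<noteq> {}" by blast
  show ?thesis unfolding mdS_def
    using dset_finite[OF a(1)] ne by (subst Min_gr_iff) auto
qed

lemma md_le: "finite S \<Longrightarrow> p \<in> S \<Longrightarrow> q \<in> S \<Longrightarrow> p \<noteq> q \<Longrightarrow> mdS S \<le> dist p q"
  unfolding mdS_def by (rule Min_le) (auto simp: dset_finite)

lemma md_aff:
  assumes "finite S" "2 \<le> card S" "(b::complex) \<noteq> 0"
  shows "mdS ((\<lambda>q. (q - x) / b) ` S) = mdS S / norm b"
proof -
  let ?g = "\<lambda>q. (q - x) / b"
  let ?D = "{dist p q | p q. p \<in> S \<and> q \<in> S \<and> p \<noteq> q}"
  have dg: "dist (?g p) (?g q) = dist p q / norm b" for p q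
    using assms(3) by (simp add: dist_norm diff_divide_distrib[symmetric] norm_divide)
  have eqg: "?g p = ?g q \<longleftrightarrow> p = q" for p q using assms(3) by (auto simp: divide_cancel_right)
  have "{dist p q | p q. p \<in> ?g ` S \<and> q \<in> ?g ` S \<and> p \<noteq> q} = (\<lambda>d. d / norm b) ` ?D"
  proof
    show "{dist p q | p q. p \<in> ?g ` S \<and> q \<in> ?g ` S \<and> p \<noteq> q} \<subseteq> (\<lambda>d. d / norm b) ` ?D"
      using dg eqg by fastforce
    show "(\<lambda>d. d / norm b) ` ?D \<subseteq> {dist p q | p q. p \<in> ?g ` S \<and> q \<in> ?g ` S \<and> p \<noteq> q}"
    proof
      fix y assume "y \<in> (\<lambda>d. d / norm b) ` ?D"
      then obtain p q where "p \<in> S" "q \<in> S" "p \<noteq> q" "y = dist p q / norm b" by blast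
      then show "y \<in> {dist p q | p q. p \<in> ?g ` S \<and> q \<in> ?g ` S \<and> p \<noteq> q}"
        using dg eqg by (metis (mono_tags, lifting) image_eqI mem_Collect_eq)
    qed
  qed
  moreover have "mono (\<lambda>d::real. d / norm b)" using assms(3) by (auto intro!: monoI divide_right_mono)
  moreover obtain p q where "p \<in> S" "q \<in> S" "p \<noteq> q" using two_elems assms by blast
  then have "?D \<noteq> {}" by blast
  ultimately show ?thesis unfolding mdS_def
    using mono_Min_commute[of "\<lambda>d::real. d / norm b" ?D] dset_finite[OF assms(1)] by simp
qed

lemma card_aff: "(b::complex) \<noteq> 0 \<Longrightarrow> card ((\<lambda>q. (q - x) / b) ` S) = card S"
  by (rule card_image) (auto simp: inj_on_def divide_cancel_right)



lemma sct_diff: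
  assumes "3 \<le> c'" "1 \<le> i" "i \<le> c'" "1 \<le> j" "j \<le> c'" "i \<noteq> j"
  shows "\<exists>P. 0 \<in># P \<and> sct c' i P \<noteq> sct c' j P"
proof (cases "i = 1 \<or> j = 1")
  case True
  have "card (set_mset {#0::complex#}) = 1" by simp
  then have "sct c' i {#0#} \<noteq> sct c' j {#0#}" using True assms unfolding sct_def by auto
  then show ?thesis by (intro exI[of _ "{#0#}"]) auto
next
  case False
  let ?P = "{#0, 1#} :: complex multiset"
  have s: "set_mset ?P = {0,1}" by simp
  have md: "min_dist ?P = 1"
  proof -
    have "{dist p q | p q. p \<in> {0::complex,1} \<and> q \<in> {0,1} \<and> p \<noteq> q} = {1}"
    proof
      show "{dist p q | p q. p \<in> {0::complex,1} \<and> q \<in> {0,1} \<and> p \<noteq> q} \<subseteq> {1}"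
        by (auto simp: dist_norm)
      have "dist (0::complex) 1 = 1" by simp
      then show "{1} \<subseteq> {dist p q | p q. p \<in> {0::complex,1} \<and> q \<in> {0,1} \<and> p \<noteq> q}"
        by force
    qed
    then show ?thesis by (simp add: min_dist_mdS mdS_def s)
  qed
  have cP: "card (set_mset ?P) = 2" by (simp add: s)
  have "sct c' i ?P = complex_of_real (1 / (2 * (real i + 1)))"
    using assms False cP md unfolding sct_def by auto
  moreover have "sct c' j ?P = complex_of_real (1 / (2 * (real j + 1)))"
    using assms False cP md unfolding sct_def by auto
  moreover have "1 / (2 * (real i + 1)) \<noteq> 1 / (2 * (real j + 1))"
    using assms(6) by (simp add: field_simps)
  ultimately have "sct c' i ?P \<noteq> sct c' j ?P" by (metis of_real_eq_iff)
  then show ?thesis by (intro exI[of _ ?P]) auto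
qed

lemma sct_inj: "3 \<le> c' \<Longrightarrow> inj_on (sct c') {1..c'}"
  unfolding inj_on_def using sct_diff by fastforce

lemma sct_alg_img: "sct_alg c' = sct c' ` {1..c'}"
  unfolding sct_alg_def by auto

lemma card_sct_alg: "3 \<le> c' \<Longrightarrow> card (sct_alg c') = c'"
  by (metis sct_alg_img card_image sct_inj card_atLeastAtMost diff_Suc_1)

lemma sct_is_alg: "3 \<le> c' \<Longrightarrow> c' \<le> n \<Longrightarrow> is_algorithm n (sct_alg c') c'"
  unfolding is_algorithm_def
  apply (intro conjI)
  apply (simp add: sct_alg_img)
  apply (simp add: card_sct_alg)
  apply simp
  apply simp
  apply (auto simp: sct_alg_img intro: sct_diff)
  done

lemma MAS_eq:
  assumes "is_algorithm n \<Phi> m0" "solves n f c \<Phi>"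
    and "\<And>m \<Psi>. m < m0 \<Longrightarrow> is_algorithm n \<Psi> m \<Longrightarrow> \<not> solves n f c \<Psi>"
  shows "MAS n f c = enat m0"
proof -
  have "(LEAST m. \<exists>\<Phi>. is_algorithm n \<Phi> m \<and> solves n f c \<Phi>) = m0"
    by (rule Least_equality) (use assms in \<open>auto simp: not_less[symmetric]\<close>)
  then show ?thesis using assms unfolding MAS_def by auto
qed

lemma MAS_inf:
  assumes "\<And>m \<Psi>. is_algorithm n \<Psi> m \<Longrightarrow> \<not> solves n f c \<Psi>"
  shows "MAS n f c = \<infinity>"
  using assms unfolding MAS_def by auto



lemma config_const: "config n (\<lambda>_. x) = image_mset (\<lambda>_. x) (mset_set {..<n})"
  by (simp add: config_def)

lemma card_config_const: "1 \<le> n \<Longrightarrow> card (set_mset (config n (\<lambda>_. x))) = 1"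
proof -
  assume "1 \<le> n"
  then have "0 \<in> {..<n}" by simp
  then have "{..<n} \<noteq> {}" by blast
  then show ?thesis by (simp add: set_config image_constant_conv)
qed

lemma surj_min:
  fixes m n :: nat
  assumes e: "bij_betw e {0..<m} \<Phi>" and m: "1 \<le> m" "m \<le> n"
  shows "(\<lambda>i. e (min i (m-1))) ` {..<n} = \<Phi>" "\<And>i. e (min i (m-1)) \<in> \<Phi>"
proof -
  show A: "\<And>i. e (min i (m-1)) \<in> \<Phi>"
  proof -
    fix i have "min i (m-1) \<in> {0..<m}" using m by (cases "i \<le> m - 1") (auto simp: min_def)
    then show "e (min i (m-1)) \<in> \<Phi>" using e by (metis bij_betw_apply)
  qed
  show "(\<lambda>i. e (min i (m-1))) ` {..<n} = \<Phi>"
  proof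
    show "(\<lambda>i. e (min i (m-1))) ` {..<n} \<subseteq> \<Phi>" using A by auto
    show "\<Phi> \<subseteq> (\<lambda>i. e (min i (m-1))) ` {..<n}"
    proof
      fix \<phi> assume "\<phi> \<in> \<Phi>"
      then obtain k where "k < m" "e k = \<phi>" using e unfolding bij_betw_def by auto
      then have "e (min k (m-1)) = \<phi>" "k < n" using m by (auto simp: min_def)
      then show "\<phi> \<in> (\<lambda>i. e (min i (m-1))) ` {..<n}" by auto
    qed
  qed
qed

lemma LB2:
  assumes alg: "is_algorithm n \<Phi> m" and mf: "m \<le> f + 1" and c2: "2 \<le> c"
  shows "\<not> solves n f c \<Phi>"
proof
  assume sol: "solves n f c \<Phi>"
  let ?M0 = "config n (\<lambda>_. 0::complex)"
  from alg have fin: "finite \<Phi>" "card \<Phi> = m" "1 \<le> m" "m \<le> n" by (auto simp: is_algorithm_def)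
  show False
  proof (cases "\<forall>\<phi>\<in>\<Phi>. \<phi> ?M0 \<noteq> 0")
    case True
    obtain e where e: "bij_betw e {0..<m} \<Phi>" using ex_bij_betw_nat_finite fin by metis
    define A where "A i = e (min i (m-1))" for i
    have A\<Phi>: "A i \<in> \<Phi>" for i using surj_min[OF e fin(3,4)] by (simp add: A_def)
    have Asurj: "A ` {..<n} = \<Phi>" using surj_min[OF e fin(3,4)] by (simp add: A_def)
    define a where "a i = 1 / A i ?M0" for i
    have ex: "exec n A a (\<lambda>_. 0) (\<lambda>_. UNIV) {} (\<lambda>_. 0) t = (\<lambda>_. of_nat t)" for t
    proof (induction t)
      case 0 then show ?case by simp
    next
      case (Suc t)
      show ?case
      proof
        fix i
        have "A i ?M0 \<noteq> 0" using True A\<Phi> by auto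
        then show "exec n A a (\<lambda>_. 0) (\<lambda>_. UNIV) {} (\<lambda>_. 0) (Suc t) i = of_nat (Suc t)"
          by (simp add: Suc config_map a_def)
      qed
    qed
    have "\<exists>t. card (set_mset (config n (exec n A a (\<lambda>_. 0) (\<lambda>_. UNIV) {} (\<lambda>_. 0) t))) \<ge> c"
      using sol Asurj True A\<Phi> unfolding solves_def a_def by auto
    then show False using ex card_config_const fin c2 by auto
  next
    case False
    then obtain z where z: "z \<in> \<Phi>" "z ?M0 = 0" by auto
    have "card (\<Phi> - {z}) = m - 1" using fin z by simp
    then obtain e where e: "bij_betw e {0..<m-1} (\<Phi> - {z})"
      using ex_bij_betw_nat_finite fin by (metis finite_Diff)
    define A where "A i = (if i < m - 1 then e i else z)" for i
    have A\<Phi>: "A i \<in> \<Phi>" for i using e z unfolding A_def bij_betw_def by auto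
    have Asurj: "A ` {..<n} = \<Phi>"
    proof
      show "A ` {..<n} \<subseteq> \<Phi>" using A\<Phi> by auto
      show "\<Phi> \<subseteq> A ` {..<n}"
      proof
        fix \<phi> assume p: "\<phi> \<in> \<Phi>"
        show "\<phi> \<in> A ` {..<n}"
        proof (cases "\<phi> = z")
          case True
          have "\<not> (n-1 < m-1)" using fin by arith
          then have "A (n-1) = \<phi>" using True by (simp add: A_def)
          moreover have "n-1 < n" using fin by arith
          ultimately show ?thesis by blast
        next
          case False
          have "\<phi> \<in> e ` {0..<m-1}" using e p False unfolding bij_betw_def by blast
          then obtain k where "k < m - 1" "e k = \<phi>" by auto
          then have "A k = \<phi>" "k < n" using fin by (auto simp: A_def)
          then show ?thesis by auto
        qed
      qed
    qed
    let ?F = "{..<m-1}"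
    have Az: "\<not> i < m-1 \<Longrightarrow> A i = z" for i by (simp add: A_def)
    have ex: "exec n A (\<lambda>_. 1) (\<lambda>_. 0) (\<lambda>_. UNIV) ?F (\<lambda>_. 0) t = (\<lambda>_. 0)" for t
    proof (induction t)
      case 0 then show ?case by simp
    next
      case (Suc t)
      show ?case
      proof
        fix i
        show "exec n A (\<lambda>_. 1) (\<lambda>_. 0) (\<lambda>_. UNIV) ?F (\<lambda>_. 0) (Suc t) i = 0"
          using z Suc.IH Az by (simp add: config_map Let_def)
      qed
    qed
    have "card ?F \<le> f" using mf by simp
    moreover have "?F \<subseteq> {..<n}" using fin by auto
    ultimately have "\<exists>t. card (set_mset (config n (exec n A (\<lambda>_. 1) (\<lambda>_. 0) (\<lambda>_. UNIV) ?F (\<lambda>_. 0) t))) \<ge> c"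
      using sol Asurj unfolding solves_def by auto
    then show False using ex card_config_const fin c2 by auto
  qed
qed

lemma LB3:
  assumes alg: "is_algorithm n \<Phi> m" and mf: "m + 2 \<le> c + f" and c3: "3 \<le> c" and fn: "f < n"
  shows "\<not> solves n f c \<Phi>"
proof
  assume sol: "solves n f c \<Phi>"
  from alg have fin: "finite \<Phi>" "card \<Phi> = m" "1 \<le> m" "m \<le> n" by (auto simp: is_algorithm_def)
  obtain e where e: "bij_betw e {0..<m} \<Phi>" using ex_bij_betw_nat_finite fin by metis
  define A where "A i = e (min i (m-1))" for i
  have Asurj: "A ` {..<n} = \<Phi>" using surj_min[OF e fin(3,4)] by (simp add: A_def)
  let ?F = "{..<f}"
  define P where "P t = exec n A (\<lambda>_. 1) (\<lambda>_. 0) (\<lambda>_. UNIV) ?F (\<lambda>_. 0) t" for t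
  have inv: "(\<forall>i\<in>?F. P t i = 0) \<and> (\<forall>i j. i \<notin> ?F \<longrightarrow> j \<notin> ?F \<longrightarrow> A i = A j \<longrightarrow> P t i = P t j)" for t
  proof (induction t)
    case 0 then show ?case by (simp add: P_def)
  next
    case (Suc t)
    have st: "P (Suc t) i = (if i \<notin> ?F then P t i + A i (image_mset (\<lambda>q. q - P t i) (config n (P t))) else P t i)" for i
      by (simp add: P_def Let_def)
    show ?case
    proof (intro conjI ballI allI impI)
      fix i assume h: "i \<in> ?F" then show "P (Suc t) i = 0" using Suc.IH st[of i] by simp
    next
      fix i j assume h: "i \<notin> ?F" "j \<notin> ?F" "A i = A j"
      then have "P t i = P t j" using Suc.IH by blast
      then show "P (Suc t) i = P (Suc t) j" using h by (simp only: st[of i] st[of j] if_True if_P)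
    qed
  qed
  have card_bound: "card (P t ` {..<n}) < c" for t
  proof -
    let ?h = "\<lambda>\<phi>. P t (SOME i. i \<notin> ?F \<and> A i = \<phi>)"
    have sub: "P t ` {..<n} \<subseteq> {0} \<union> ?h ` (A ` ({..<n} - ?F))"
    proof
      fix x assume "x \<in> P t ` {..<n}"
      then obtain i where i: "i < n" "x = P t i" by auto
      show "x \<in> {0} \<union> ?h ` (A ` ({..<n} - ?F))"
      proof (cases "i \<in> ?F")
        case True
        then have "P t i = 0" using inv[of t] by blast
        then show ?thesis using i by simp
      next
        case False
        have "\<exists>j. j \<notin> ?F \<and> A j = A i" using False by blast
        then have "(SOME j. j \<notin> ?F \<and> A j = A i) \<notin> ?F \<and> A (SOME j. j \<notin> ?F \<and> A j = A i) = A i"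
          by (rule someI_ex)
        then have "P t (SOME j. j \<notin> ?F \<and> A j = A i) = P t i" using inv[of t] False by blast
        then have hx: "?h (A i) = x" using i by simp
        have "A i \<in> A ` ({..<n} - ?F)" using i False by auto
        then have "?h (A i) \<in> ?h ` (A ` ({..<n} - ?F))" by (rule imageI)
        then show ?thesis using hx by blast
      qed
    qed
    have s2: "A ` ({..<n} - ?F) \<subseteq> e ` {min f (m-1)..<m}"
    proof
      fix y assume "y \<in> A ` ({..<n} - ?F)"
      then obtain i where i: "i \<ge> f" "y = A i" by auto
      have "min i (m-1) \<in> {min f (m-1)..<m}" using fin i(1) by (auto simp: min_def)
      then show "y \<in> e ` {min f (m-1)..<m}" using i(2) unfolding A_def by blast
    qed
    have "card (e ` {min f (m-1)..<m}) \<le> m - min f (m-1)"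
      by (metis card_atLeastLessThan card_image_le finite_atLeastLessThan)
    then have c1: "card (A ` ({..<n} - ?F)) \<le> m - min f (m-1)"
      using s2 by (meson card_mono finite_atLeastLessThan finite_imageI le_trans)
    have "card (P t ` {..<n}) \<le> card ({0} \<union> ?h ` (A ` ({..<n} - ?F)))"
      using sub by (intro card_mono) auto
    also have "\<dots> \<le> 1 + card (?h ` (A ` ({..<n} - ?F)))"
      using card_Un_le[of "{0}"] by simp
    also have "\<dots> \<le> 1 + card (A ` ({..<n} - ?F))"
      using card_image_le by auto
    also have "\<dots> < c"
    proof -
      have "m - min f (m-1) + 1 < c"
      proof (cases "f \<le> m - 1")
        case True then show ?thesis using mf c3 fin by (simp add: min_def)
      next
        case False then show ?thesis using mf c3 fin by (simp add: min_def)
      qed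
      then show ?thesis using c1 by linarith
    qed
    finally show ?thesis .
  qed
  have "\<exists>t. card (set_mset (config n (P t))) \<ge> c"
    unfolding P_def
    using spec[OF spec[OF spec[OF spec[OF spec[OF spec[OF sol[unfolded solves_def], of A], of "\<lambda>_. 1"],
      of "\<lambda>_. 0"], of "\<lambda>_. UNIV"], of "{..<f}"], of "\<lambda>_. 0"] Asurj fn by simp
  then obtain t where "c \<le> card (set_mset (config n (P t)))" by blast
  then have "c \<le> card (P t ` {..<n})" by (simp only: set_config)
  then show False using card_bound[of t] by simp
qed



locale scat =
  fixes n f c c' :: nat and A :: "nat \<Rightarrow> tfun" and a :: "nat \<Rightarrow> complex"
    and p0 :: "nat \<Rightarrow> complex" and act :: "nat \<Rightarrow> nat set" and F :: "nat set" and ct :: "nat \<Rightarrow> nat"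
  assumes n1: "n \<ge> 1" and cc: "c + f \<le> c' + 1" and cf: "f + 2 \<le> c'" and c3: "3 \<le> c'"
    and cc2: "c \<le> c'"
    and Asurj: "A ` {..<n} = sct_alg c'"
    and anz: "\<forall>i<n. a i \<noteq> 0"
    and fair: "\<forall>i<n. infinite {t. i \<in> act t}"
    and Fsub: "F \<subseteq> {..<n}" and Fcard: "card F \<le> f"
begin

definition P where "P t = exec n A a p0 act F ct t"
definition K where "K t = card (P t ` {..<n})"
definition D where "D t = mdS (P t ` {..<n})"
definition mv where "mv t i \<longleftrightarrow> i \<in> act t \<and> \<not> (i \<in> F \<and> ct i \<le> t)"
definition idx where "idx i = (SOME k. 1 \<le> k \<and> k \<le> c' \<and> A i = sct c' k)"

lemma idx: "i < n \<Longrightarrow> 1 \<le> idx i \<and> idx i \<le> c' \<and> A i = sct c' (idx i)"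
proof -
  assume "i < n"
  then have "A i \<in> sct_alg c'" using Asurj by auto
  then have "\<exists>k. 1 \<le> k \<and> k \<le> c' \<and> A i = sct c' k" unfolding sct_alg_def by auto
  then show ?thesis unfolding idx_def by (rule someI_ex)
qed

lemma P_Suc: "P (Suc t) i = (if mv t i then P t i + a i * A i (config n (\<lambda>j. (P t j - P t i) / a i)) else P t i)"
  by (auto simp: P_def mv_def Let_def config_map)

lemma K_pos: "1 \<le> K t"
proof -
  have "P t 0 \<in> P t ` {..<n}" using n1 by simp
  then have "P t ` {..<n} \<noteq> {}" by blast
  then show ?thesis unfolding K_def by (simp add: Suc_le_eq card_gt_0_iff)
qed

lemma K_le: "K t \<le> n"
  unfolding K_def using card_image_le[of "{..<n}" "P t"] by simp

lemma obs_set: "set_mset (config n (\<lambda>j. (P t j - P t i) / a i)) = (\<lambda>q. (q - P t i) / a i) ` (P t ` {..<n})"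
  by (simp add: set_config image_image)

lemma step2:
  assumes "2 \<le> K t" "K t < c'" "i < n"
  shows "P (Suc t) i = (if mv t i then P t i + a i * complex_of_real (D t / norm (a i) / (2 * (real (idx i) + 1))) else P t i)"
proof -
  have ai: "a i \<noteq> 0" using anz assms by auto
  have cardQ: "card (set_mset (config n (\<lambda>j. (P t j - P t i) / a i))) = K t"
    using ai by (simp add: obs_set card_aff K_def)
  have mdQ: "min_dist (config n (\<lambda>j. (P t j - P t i) / a i)) = D t / norm (a i)"
    using ai assms by (simp add: min_dist_mdS obs_set md_aff K_def D_def)
  have "A i (config n (\<lambda>j. (P t j - P t i) / a i)) = complex_of_real (D t / norm (a i) / (2 * (real (idx i) + 1)))"
    using idx[OF assms(3)] cardQ mdQ assms by (simp add: sct_def)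
  then show ?thesis by (simp add: P_Suc)
qed

lemma D_pos: "2 \<le> K t \<Longrightarrow> D t > 0"
  unfolding D_def K_def by (rule md_pos) auto

lemma disp:
  assumes "2 \<le> K t" "K t < c'" "i < n"
  shows "dist (P (Suc t) i) (P t i) = (if mv t i then D t / (2 * (real (idx i) + 1)) else 0)"
proof -
  have ai: "a i \<noteq> 0" using anz assms by auto
  have Dp: "D t > 0" using D_pos assms by auto
  let ?r = "D t / norm (a i) / (2 * (real (idx i) + 1))"
  have r0: "?r \<ge> 0" using Dp by simp
  have "norm (a i * complex_of_real ?r) = norm (a i) * ?r"
    using r0 by (simp only: norm_mult norm_of_real abs_of_nonneg)
  also have "\<dots> = D t / (2 * (real (idx i) + 1))" using ai by simp
  finally have "norm (a i * complex_of_real ?r) = D t / (2 * (real (idx i) + 1))" .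
  then show ?thesis using step2[OF assms] by (simp add: dist_norm)
qed

lemma disp_le:
  assumes "2 \<le> K t" "K t < c'" "i < n"
  shows "dist (P (Suc t) i) (P t i) \<le> D t / 4"
proof -
  have Dp: "D t > 0" using D_pos assms by auto
  have "1 \<le> idx i" using idx assms by auto
  then have "4 \<le> 2 * (real (idx i) + 1)" by simp
  then have "D t / (2 * (real (idx i) + 1)) \<le> D t / 4" using Dp by (intro divide_left_mono) auto
  then show ?thesis using disp[OF assms] Dp by auto
qed

lemma L2:
  assumes "2 \<le> K t" "K t < c'" "i < n" "j < n" "P (Suc t) i = P (Suc t) j"
  shows "P t i = P t j"
proof (rule ccontr)
  assume ne: "P t i \<noteq> P t j"
  have "D t \<le> dist (P t i) (P t j)" unfolding D_def using ne assms by (intro md_le) auto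
  moreover have "dist (P t i) (P t j) \<le> dist (P (Suc t) i) (P t i) + dist (P (Suc t) j) (P t j)"
    using assms(5) by (metis dist_commute dist_triangle)
  moreover have "D t > 0" using D_pos assms by auto
  ultimately show False using disp_le[OF assms(1,2,3)] disp_le[OF assms(1,2,4)] by linarith
qed

definition hh where "hh t y = P t (SOME i. i < n \<and> P (Suc t) i = y)"

lemma hh: "2 \<le> K t \<Longrightarrow> K t < c' \<Longrightarrow> i < n \<Longrightarrow> hh t (P (Suc t) i) = P t i"
proof -
  assume a: "2 \<le> K t" "K t < c'" "i < n"
  have "\<exists>j. j < n \<and> P (Suc t) j = P (Suc t) i" using a by blast
  then have "(SOME j. j < n \<and> P (Suc t) j = P (Suc t) i) < n \<and> P (Suc t) (SOME j. j < n \<and> P (Suc t) j = P (Suc t) i) = P (Suc t) i"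
    by (rule someI_ex)
  then show ?thesis unfolding hh_def using L2 a by blast
qed

lemma hh_img: "2 \<le> K t \<Longrightarrow> K t < c' \<Longrightarrow> hh t ` (P (Suc t) ` {..<n}) = P t ` {..<n}"
  using hh by (auto simp: image_image)

lemma K_mono2: "2 \<le> K t \<Longrightarrow> K t < c' \<Longrightarrow> K t \<le> K (Suc t)"
proof -
  assume a: "2 \<le> K t" "K t < c'"
  have "card (P t ` {..<n}) = card (hh t ` (P (Suc t) ` {..<n}))" using hh_img[OF a] by simp
  also have "\<dots> \<le> card (P (Suc t) ` {..<n})" by (rule card_image_le) simp
  finally show ?thesis unfolding K_def .
qed

lemma L4:
  assumes "2 \<le> K t" "K t < c'" "K (Suc t) = K t" "i < n" "j < n" "P t i = P t j"
  shows "P (Suc t) i = P (Suc t) j"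
proof -
  have "inj_on (hh t) (P (Suc t) ` {..<n})"
    using assms hh_img[OF assms(1,2)] unfolding K_def by (intro eq_card_imp_inj_on) auto
  then show ?thesis using hh[OF assms(1,2,4)] hh[OF assms(1,2,5)] assms(4,5,6)
    by (metis image_eqI inj_onD lessThan_iff)
qed

lemma step1:
  assumes "K t = 1" "i < n"
  shows "P (Suc t) i = (if mv t i \<and> 2 \<le> idx i then P t i + a i else P t i)"
proof -
  have ai: "a i \<noteq> 0" using anz assms by auto
  have cardQ: "card (set_mset (config n (\<lambda>j. (P t j - P t i) / a i))) = 1"
    using ai assms by (simp add: obs_set card_aff K_def)
  have "A i (config n (\<lambda>j. (P t j - P t i) / a i)) = (if idx i = 1 then 0 else 1)"
    using idx[OF assms(2)] cardQ c3 by (simp add: sct_def)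
  then show ?thesis using idx[OF assms(2)] by (auto simp: P_Suc)
qed

lemma sct_in: "1 \<le> k \<Longrightarrow> k \<le> c' \<Longrightarrow> \<exists>i<n. idx i = k"
proof -
  assume k: "1 \<le> k" "k \<le> c'"
  then have "sct c' k \<in> A ` {..<n}" using Asurj by (auto simp: sct_alg_img)
  then obtain i where i: "i < n" "A i = sct c' k" by auto
  then have "sct c' (idx i) = sct c' k" "1 \<le> idx i" "idx i \<le> c'" using idx by auto
  then have "idx i = k" using sct_inj[OF c3] k by (auto dest: inj_onD)
  then show ?thesis using i by auto
qed

lemma reach: "\<exists>t. K t \<ge> c"
proof (rule ccontr)
  assume "\<not> ?thesis"
  then have lt: "\<forall>t. K t < c" by (auto simp: not_le)
  have mono1: "K t \<le> K (Suc t)" for t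
  proof (cases "K t = 1")
    case True then show ?thesis using K_pos[of "Suc t"] by simp
  next
    case False
    then have "2 \<le> K t" using K_pos[of t] by simp
    moreover have "K t < c'" using lt cc2 by (meson order_less_le_trans)
    ultimately show ?thesis by (rule K_mono2)
  qed
  have inc: "incseq K" using mono1 by (intro incseq_SucI) auto
  define M where "M = Max (range K)"
  have fr: "finite (range K)" by (rule finite_subset[of _ "{..n}"]) (auto simp: K_le)
  have "M \<in> range K" using fr by (simp add: M_def)
  then obtain T where T: "K T = M" by auto
  have stable: "K t = K T" if "t \<ge> T" for t
  proof -
    have "K T \<le> K t" using inc that by (simp add: incseq_def)
    moreover have "K t \<le> M" unfolding M_def using fr by (intro Max_ge) auto
    ultimately show ?thesis using T by simp
  qed
  show False
  proof (cases "K T = 1")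
    case True
    define R where "R = {i. i < n \<and> 2 \<le> idx i}"
    have finR: "finite R" unfolding R_def by auto
    have sub: "sct c' ` {2..c'} \<subseteq> A ` R"
    proof
      fix y assume "y \<in> sct c' ` {2..c'}"
      then obtain k where k: "2 \<le> k" "k \<le> c'" "y = sct c' k" by auto
      have "1 \<le> k" using k by simp
      then obtain i where i: "i < n" "idx i = k" using sct_in k(2) by blast
      then have "A i = y" using idx k by auto
      moreover have "i \<in> R" using i k unfolding R_def by auto
      ultimately show "y \<in> A ` R" by blast
    qed
    have "card (sct c' ` {2..c'}) = c' - 1"
      using inj_on_subset[OF sct_inj[OF c3], of "{2..c'}"] by (simp add: card_image)
    moreover have "card (sct c' ` {2..c'}) \<le> card R"
      using sub finR by (meson card_image_le card_mono finite_imageI le_trans)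
    ultimately have cR: "c' - 1 \<le> card R" by simp
    have "\<not> R \<subseteq> F"
    proof
      assume "R \<subseteq> F"
      then have "card R \<le> card F" using Fsub by (intro card_mono) (auto intro: finite_subset)
      then show False using cR Fcard cf by linarith
    qed
    then obtain r where r: "r < n" "2 \<le> idx r" "r \<notin> F" unfolding R_def by auto
    obtain s where s: "s < n" "idx s = 1" using sct_in c3 by fastforce
    obtain t where t: "t \<ge> T" "r \<in> act t"
      using fair r(1) by (auto simp: infinite_nat_iff_unbounded_le)
    have Kt: "K t = 1" using stable t True by simp
    then obtain x where x: "P t ` {..<n} = {x}" unfolding K_def by (auto simp: card_1_singleton_iff)
    have eq: "P t r = P t s" using x r s by (metis image_eqI lessThan_iff singletonD)
    have "mv t r" using t r unfolding mv_def by auto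
    then have "P (Suc t) r = P t r + a r" using step1[OF Kt r(1)] r by simp
    moreover have "P (Suc t) s = P t s" using step1[OF Kt s(1)] s by simp
    moreover have "a r \<noteq> 0" using anz r by auto
    ultimately have "P (Suc t) r \<noteq> P (Suc t) s" using eq by auto
    then have "2 \<le> K (Suc t)" unfolding K_def using r s by (intro card_ge2) auto
    moreover have "K (Suc t) = 1" using stable[of "Suc t"] t True by simp
    ultimately show False by simp
  next
    case False
    then have k2: "2 \<le> K T" using K_pos[of T] by simp
    have st: "2 \<le> K t \<and> K t < c' \<and> K (Suc t) = K t" if "t \<ge> T" for t
      using stable[of t] stable[of "Suc t"] that k2 lt[rule_format, of t] cc2 by auto
    have finF: "finite F" using Fsub finite_subset by blast
    define T' where "T' = T + sum ct F"
    have ctF: "ct i \<le> T'" if "i \<in> F" for i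
      using member_le_sum[of i F ct] that finF unfolding T'_def by simp
    have persist: "P (T' + d) i = P (T' + d) j" if "i < n" "j < n" "P T' i = P T' j" for d i j
    proof (induction d)
      case 0 then show ?case using that by simp
    next
      case (Suc d)
      have "T' + d \<ge> T" unfolding T'_def by simp
      then show ?case using st[of "T' + d"] L4[of "T' + d" i j] Suc that by simp
    qed
    have C: "s \<notin> F \<and> idx s = idx r" if hr: "r < n" "r \<notin> F" "s < n" "P T' r = P T' s" for r s
    proof -
      obtain t where t: "t \<ge> T'" "r \<in> act t"
        using fair hr(1) by (auto simp: infinite_nat_iff_unbounded_le)
      obtain d where d: "t = T' + d" using t by (metis le_add_diff_inverse)
      have e1: "P t r = P t s" using persist[OF hr(1,3,4), of d] d by simp
      have e2: "P (Suc t) r = P (Suc t) s" using persist[OF hr(1,3,4), of "Suc d"] d by simp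
      have tT: "t \<ge> T" using t unfolding T'_def by simp
      note stt = st[OF tT]
      have mr: "mv t r" using t hr unfolding mv_def by auto
      have Dp: "D t > 0" using D_pos stt by auto
      have dr: "dist (P (Suc t) r) (P t r) = D t / (2 * (real (idx r) + 1))"
        using disp[of t r] stt hr mr by simp
      have pos: "D t / (2 * (real (idx r) + 1)) > 0" using Dp by simp
      have ms: "mv t s"
      proof (rule ccontr)
        assume "\<not> mv t s"
        then have "dist (P (Suc t) s) (P t s) = 0" using disp[of t s] stt hr by simp
        then show False using dr pos e1 e2 by simp
      qed
      then have "s \<notin> F" using ctF t unfolding mv_def by fastforce
      moreover have "dist (P (Suc t) s) (P t s) = D t / (2 * (real (idx s) + 1))"
        using disp[of t s] stt hr ms by simp
      then have "D t / (2 * (real (idx s) + 1)) = D t / (2 * (real (idx r) + 1))"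
        using dr e1 e2 by simp
      then have "idx s = idx r" using Dp by (simp add: field_simps)
      ultimately show ?thesis by simp
    qed
    define S where "S = P T' ` {..<n}"
    have kS: "card S = K T" unfolding S_def using st[of T'] stable[of T'] unfolding K_def T'_def by simp
    define L where "L = S - P T' ` F"
    define ch where "ch x = A (SOME r. r < n \<and> r \<notin> F \<and> P T' r = x)" for x
    have cover: "A ` {..<n} \<subseteq> A ` F \<union> ch ` L"
    proof
      fix y assume "y \<in> A ` {..<n}"
      then obtain r where r: "r < n" "y = A r" by auto
      show "y \<in> A ` F \<union> ch ` L"
      proof (cases "r \<in> F")
        case True then show ?thesis using r by auto
      next
        case False
        have inL: "P T' r \<in> L"
        proof -
          have "P T' r \<notin> P T' ` F"
          proof
            assume "P T' r \<in> P T' ` F"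
            then obtain s where "s \<in> F" "P T' r = P T' s" by auto
            then show False using C[of r s] r False Fsub by auto
          qed
          then show ?thesis unfolding L_def S_def using r by auto
        qed
        have "\<exists>q. q < n \<and> q \<notin> F \<and> P T' q = P T' r" using r False by blast
        then have q: "(SOME q. q < n \<and> q \<notin> F \<and> P T' q = P T' r) < n \<and>
            (SOME q. q < n \<and> q \<notin> F \<and> P T' q = P T' r) \<notin> F \<and>
            P T' (SOME q. q < n \<and> q \<notin> F \<and> P T' q = P T' r) = P T' r" by (rule someI_ex)
        then have "idx r = idx (SOME q. q < n \<and> q \<notin> F \<and> P T' q = P T' r)"
          using C[of "SOME q. q < n \<and> q \<notin> F \<and> P T' q = P T' r" r] r by auto
        then have "ch (P T' r) = A r" unfolding ch_def using idx q r by metis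
        then have "y \<in> ch ` L" using inL r by (metis image_eqI)
        then show ?thesis by blast
      qed
    qed
    have finS: "finite S" unfolding S_def by simp
    have "c' = card (A ` {..<n})" using Asurj card_sct_alg[OF c3] by simp
    also have "\<dots> \<le> card (A ` F \<union> ch ` L)" using cover finF finS unfolding L_def
      by (intro card_mono) auto
    also have "\<dots> \<le> card (A ` F) + card (ch ` L)" by (rule card_Un_le)
    also have "\<dots> \<le> card F + card L"
    proof (rule add_mono)
      show "card (A ` F) \<le> card F" using finF by (rule card_image_le)
      show "card (ch ` L) \<le> card L" using finS unfolding L_def by (intro card_image_le) simp
    qed
    finally have cb: "c' \<le> card F + card L" .
    show False
    proof (cases "F = {}")
      case True
      then have "L = S" unfolding L_def by simp
      then show False using cb True kS lt[rule_format, of T] cc2 by simp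
    next
      case False
      then obtain i where i: "i \<in> F" by auto
      have "P T' i \<in> S" using i Fsub unfolding S_def by auto
      then have "card L < card S" unfolding L_def using i finS
        by (intro psubset_card_mono) auto
      then show False using cb Fcard kS lt[rule_format, of T] cc by linarith
    qed
  qed
qed

end

lemma sct_solves:
  assumes "n \<ge> 1" "c + f \<le> c' + 1" "f + 2 \<le> c'" "3 \<le> c'" "c \<le> c'"
  shows "solves n f c (sct_alg c')"
  unfolding solves_def
proof (intro allI impI)
  fix A :: "nat \<Rightarrow> tfun" and a :: "nat \<Rightarrow> complex" and p0 :: "nat \<Rightarrow> complex"
    and act :: "nat \<Rightarrow> nat set" and F :: "nat set" and ct :: "nat \<Rightarrow> nat"
  assume h: "A ` {..<n} = sct_alg c'" "\<forall>i<n. a i \<noteq> 0" "\<forall>i<n. infinite {t. i \<in> act t}"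
    "F \<subseteq> {..<n}" "card F \<le> f"
  interpret scat n f c c' A a p0 act F ct using assms h by unfold_locales auto
  show "\<exists>t. c \<le> card (set_mset (config n (exec n A a p0 act F ct t)))"
    using reach by (simp add: K_def P_def set_config)
qed



theorem mainTheorem9:
  fixes n f c :: nat
  assumes "n \<ge> 2" and "1 \<le> f" and "f \<le> n - 1" and "2 \<le> c" and "c \<le> n"
  shows "(c = 2 \<longrightarrow>
            (f = n - 1 \<longrightarrow> MAS n f c = \<infinity>) \<and>
            (f \<le> n - 2 \<longrightarrow> MAS n f c = enat (f + 2) \<and>
               is_algorithm n (sct_alg (f + 2)) (f + 2) \<and> solves n f c (sct_alg (f + 2))))
       \<and> (3 \<le> c \<longrightarrow>
            (c + f - 1 > n \<longrightarrow> MAS n f c = \<infinity>) \<and>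
            (c + f - 1 \<le> n \<longrightarrow> MAS n f c = enat (c + f - 1) \<and>
               is_algorithm n (sct_alg (c + f - 1)) (c + f - 1) \<and>
               solves n f c (sct_alg (c + f - 1))))"
proof (intro conjI impI)
  have mn: "m \<le> n" if "is_algorithm n \<Psi> m" for m \<Psi> using that by (simp add: is_algorithm_def)
  {
    assume c2: "c = 2" "f = n - 1"
    show "MAS n f c = \<infinity>"
    proof (rule MAS_inf)
      fix m \<Psi> assume h: "is_algorithm n \<Psi> m"
      then have "m \<le> f + 1" using mn[OF h] c2 assms by simp
      then show "\<not> solves n f c \<Psi>" using LB2 h assms by blast
    qed
  }
  {
    assume c2: "c = 2" "f \<le> n - 2"
    show alg: "is_algorithm n (sct_alg (f + 2)) (f + 2)" using assms c2 by (intro sct_is_alg) auto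
    show sol: "solves n f c (sct_alg (f + 2))" using assms c2 by (intro sct_solves) auto
    show "MAS n f c = enat (f + 2)"
    proof (rule MAS_eq[OF alg sol])
      fix m \<Psi> assume "m < f + 2" "is_algorithm n \<Psi> m"
      then show "\<not> solves n f c \<Psi>" using LB2 assms by (metis less_Suc_eq_le add_2_eq_Suc' add.commute Suc_eq_plus1)
    qed
  }
  {
    assume c3: "3 \<le> c" "c + f - 1 > n"
    show "MAS n f c = \<infinity>"
    proof (rule MAS_inf)
      fix m \<Psi> assume h: "is_algorithm n \<Psi> m"
      then have "m + 2 \<le> c + f" using mn[OF h] c3 by simp
      moreover have "f < n" using assms by simp
      ultimately show "\<not> solves n f c \<Psi>" using LB3 h c3 by blast
    qed
  }
  {
    assume c3: "3 \<le> c" "c + f - 1 \<le> n"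
    show alg: "is_algorithm n (sct_alg (c + f - 1)) (c + f - 1)" using assms c3 by (intro sct_is_alg) auto
    show sol: "solves n f c (sct_alg (c + f - 1))" using assms c3 by (intro sct_solves) auto
    show "MAS n f c = enat (c + f - 1)"
    proof (rule MAS_eq[OF alg sol])
      fix m \<Psi> assume h: "m < c + f - 1" "is_algorithm n \<Psi> m"
      then have "m + 2 \<le> c + f" by simp
      moreover have "f < n" using assms by simp
      ultimately show "\<not> solves n f c \<Psi>" using LB3 h c3 by blast
    qed
  }
qed


end
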